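(* Let $\Theta\subseteq\mathbb{R}^p$ be open and $\theta\mapsto|\psi_\theta\rangle$ a differentiable family of unit vectors in $\mathbb{C}^d$, with $\rho_\theta=|\psi_\theta\rangle\langle\psi_\theta|$, and let $\theta_0\in\Theta$. Then equality in the quantum Cramér–Rao inequality is attainable at $\theta_0$ (equivalently, Matsumoto's condition $\mathrm{Im}\langle l_j(\theta_0)|l_k(\theta_0)\rangle=0$ for all $j,k$ holds) if and only if $\mathrm{Im}\langle\psi^{(j)}_{\theta_0}|\psi^{(k)}_{\theta_0}\rangle=0$ for all $j,k$, where $|\psi^{(j)}_\theta\rangle=\partial|\psi_\theta\rangle/\partial\theta^j$.
   Context: For $j=1,\dots,p$ let $\lambda^j_\theta$ be a Hermitian solution of $\frac{\partial\rho_\theta}{\partial\theta^j}=\frac12(\rho_\theta\lambda^j_\theta+\lambda^j_\theta\rho_\theta)$ (symmetric logarithmic derivative), and $|l_j(\theta)\rangle=\lambda^j_\theta|\psi_\theta\rangle$ (independent of the choice of $\lambda^j_\theta$). The SLD quantum information is the matrix $(H_\theta)_{jk}=\mathrm{Re}\,\mathrm{tr}\{\lambda^j_\theta\rho_\theta\lambda^k_\theta\}$. The quantum Cramér–Rao inequality states that for a POVM with unbiased estimator $\hat\theta$, $E[(\hat\theta-\theta)(\hat\theta-\theta)^T]\ge H_\theta^{-1}$; by a theorem of Matsumoto, for pure-state families there exist a POVM and estimator achieving equality at $\theta_0$ if and only if $\mathrm{Im}\langle l_j(\theta_0)|l_k(\theta_0)\rangle=0$ for all $j,k$. *)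

theory Defs
  imports "HOL-Analysis.Analysis"
begin

definition cinner :: "complex^'d \<Rightarrow> complex^'d \<Rightarrow> complex" where
  "cinner u v = (\<Sum>i\<in>UNIV. cnj (u $ i) * v $ i)"

definition ketbra :: "complex^'d \<Rightarrow> complex^'d^'d" where
  "ketbra u = (\<chi> i k. u $ i * cnj (u $ k))"

definition adjoint :: "complex^'d^'d \<Rightarrow> complex^'d^'d" where
  "adjoint A = (\<chi> i k. cnj (A $ k $ i))"

definition hermitian :: "complex^'d^'d \<Rightarrow> bool" where
  "hermitian A \<longleftrightarrow> adjoint A = A"

definition partial_deriv :: "(real^'p \<Rightarrow> 'b::real_normed_vector) \<Rightarrow> real^'p \<Rightarrow> 'p \<Rightarrow> 'b" where
  "partial_deriv f x j = frechet_derivative f (at x) (axis j 1)"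

definition is_SLD :: "(real^'p \<Rightarrow> complex^'d^'d) \<Rightarrow> real^'p \<Rightarrow> 'p \<Rightarrow> complex^'d^'d \<Rightarrow> bool" where
  "is_SLD rho x j lam \<longleftrightarrow> hermitian lam \<and>
     partial_deriv rho x j = (1/2::real) *\<^sub>R (rho x ** lam + lam ** rho x)"

end

theory Submission imports Defs begin

definition outer :: "complex^'d \<Rightarrow> complex^'d \<Rightarrow> complex^'d^'d" where
  "outer u w = (\<chi> i k. u $ i * cnj (w $ k))"

lemma bilinear_outer: "bilinear (outer :: complex^'d \<Rightarrow> _)"
  unfolding bilinear_def linear_iff outer_def
  by (auto simp: vec_eq_iff vector_scaleR_component algebra_simps)

lemma bilinear_cinner: "bilinear (cinner :: complex^'d \<Rightarrow> _)"
  unfolding bilinear_def linear_iff cinner_def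
  by (auto simp: vector_scaleR_component algebra_simps sum.distrib scaleR_sum_right)

lemma cinner_self: "cinner u u = of_real (norm u ^ 2)"
proof -
  have "norm u ^ 2 = (\<Sum>i\<in>UNIV. (norm (u $ i))^2)"
    unfolding norm_vec_def L2_set_def by (simp add: sum_nonneg)
  then show ?thesis unfolding cinner_def
    by (simp add: of_real_sum complex_norm_square[unfolded of_real_power] mult.commute)
qed

lemma cinner_cnj: "cinner u v = cnj (cinner v u)"
  unfolding cinner_def by (simp add: mult.commute)

lemma outer_mv: "(outer u w *v v) $ i = u $ i * cinner w v"
  by (simp add: outer_def matrix_vector_mult_def cinner_def sum_distrib_left mult.assoc)

lemma add_mv: "((A + B) *v v) $ i = (A *v v) $ i + (B *v v) $ i"
  by (simp add: matrix_vector_mult_def sum.distrib algebra_simps)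

lemma scale_mv: "((r *\<^sub>R (A::complex^'n^'m)) *v v) $ i = r *\<^sub>R ((A *v v) $ i)"
  by (simp add: matrix_vector_mult_def scaleR_sum_right vector_scaleR_component)

lemma key_l:
  fixes p d l :: "complex^'d" and L :: "complex^'d^'d" and s :: complex
  assumes pp: "cinner p p = 1" and s: "s = cinner p d" and s0: "s + cnj s = 0"
    and E: "outer p d + outer d p = (1/2::real) *\<^sub>R (outer p p ** L + L ** outer p p)"
    and l: "l = L *v p"
  shows "l $ i = 2 * d $ i - 2 * s * p $ i"
proof -
  have pv: "outer p p *v p = p" by (simp add: vec_eq_iff outer_mv pp)
  have Ei: "\<And>i. ((outer p d + outer d p) *v p) $ i
     = (((1/2::real) *\<^sub>R (outer p p ** L + L ** outer p p)) *v p) $ i"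
    using E by simp
  have cs: "cinner d p = cnj s" using s cinner_cnj by metis
  define c where "c = cinner p l"
  have li: "\<And>i. l $ i = 2 * d $ i + 2 * cnj s * p $ i - c * p $ i"
  proof -
    fix i
    from Ei[of i] have "p $ i * cnj s + d $ i = (1/2::real) *\<^sub>R (p $ i * cinner p l + l $ i)"
      by (simp add: add_mv scale_mv outer_mv cs pp pv l flip: matrix_vector_mul_assoc)
    then show "l $ i = 2 * d $ i + 2 * cnj s * p $ i - c * p $ i"
      by (simp add: scaleR_conv_of_real field_simps c_def)
  qed
  have "c = (\<Sum>i\<in>UNIV. cnj (p $ i) * (2 * d $ i + 2 * cnj s * p $ i - c * p $ i))"
  proof -
    have "c = (\<Sum>i\<in>UNIV. cnj (p $ i) * l $ i)" by (simp add: c_def cinner_def)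
    then show ?thesis by (simp only: li)
  qed
  also have "\<dots> = 2 * cinner p d + 2 * cnj s * cinner p p - c * cinner p p"
    unfolding cinner_def by (simp add: algebra_simps sum.distrib sum_subtractf sum_distrib_left)
  finally have "c = 2 * s + 2 * cnj s - c" using pp s by simp
  then have "2 * c = 2 * (s + cnj s)" by (simp add: algebra_simps)
  then have "c = 0" using s0 by simp
  moreover have "cnj s = - s" using s0 by (simp add: eq_neg_iff_add_eq_0 add.commute)
  ultimately show ?thesis using li[of i] by (simp add: algebra_simps)
qed

lemma key_im:
  fixes p dj dk lj lk :: "complex^'d" and sj sk :: complex
  assumes pp: "cinner p p = 1" and sj: "sj = cinner p dj" and sk: "sk = cinner p dk"
    and sj0: "sj + cnj sj = 0" and sk0: "sk + cnj sk = 0"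
    and lj: "\<And>i. lj $ i = 2 * dj $ i - 2 * sj * p $ i"
    and lk: "\<And>i. lk $ i = 2 * dk $ i - 2 * sk * p $ i"
  shows "Im (cinner lj lk) = 4 * Im (cinner dj dk)"
proof -
  have "cinner lj lk = (\<Sum>i\<in>UNIV. cnj (2 * dj $ i - 2 * sj * p $ i) * (2 * dk $ i - 2 * sk * p $ i))"
    unfolding cinner_def using lj lk by simp
  also have "\<dots> = 4 * cinner dj dk - 4 * sk * cinner dj p - 4 * cnj sj * cinner p dk
      + 4 * cnj sj * sk * cinner p p"
    unfolding cinner_def by (simp add: algebra_simps sum.distrib sum_subtractf sum_distrib_left)
  also have "\<dots> = 4 * cinner dj dk - 4 * cnj sj * sk"
    using pp sj sk cinner_cnj[of dj p] by (simp add: algebra_simps)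
  finally have "cinner lj lk = 4 * cinner dj dk - 4 * cnj sj * sk" .
  moreover have "Re sj = 0" "Re sk = 0" using sj0 sk0
    by (metis complex_add_cnj mult_eq_0_iff of_real_eq_0_iff zero_neq_numeral)+
  ultimately show ?thesis by simp
qed

theorem lemma4p1:
  fixes Th :: "(real^'p) set"
    and \<psi> :: "real^'p \<Rightarrow> complex^'d"
    and \<theta>0 :: "real^'p"
    and lam :: "'p \<Rightarrow> complex^'d^'d"
  assumes "open Th"
    and "\<And>\<theta>. \<theta> \<in> Th \<Longrightarrow> \<psi> differentiable (at \<theta>)"
    and "\<And>\<theta>. \<theta> \<in> Th \<Longrightarrow> norm (\<psi> \<theta>) = 1"
    and "\<theta>0 \<in> Th"
    and "\<And>j. is_SLD (\<lambda>\<theta>. ketbra (\<psi> \<theta>)) \<theta>0 j (lam j)"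
  shows "(\<forall>j k. Im (cinner (lam j *v \<psi> \<theta>0) (lam k *v \<psi> \<theta>0)) = 0)
     \<longleftrightarrow> (\<forall>j k. Im (cinner (partial_deriv \<psi> \<theta>0 j) (partial_deriv \<psi> \<theta>0 k)) = 0)"
proof -
  define p where "p = \<psi> \<theta>0"
  define D where "D = frechet_derivative \<psi> (at \<theta>0)"
  define d where "d j = D (axis j 1)" for j
  define s where "s j = cinner p (d j)" for j
  have hasD: "(\<psi> has_derivative D) (at \<theta>0)"
    unfolding D_def using assms(2,4) frechet_derivative_works by blast
  have pd: "partial_deriv \<psi> \<theta>0 j = d j" for j
    by (simp add: partial_deriv_def d_def D_def)
  have pp: "cinner p p = 1" using assms(3,4) by (simp add: p_def cinner_self)
  have bbO: "bounded_bilinear (outer :: complex^'d \<Rightarrow> _)"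
    using bilinear_outer bilinear_conv_bounded_bilinear by blast
  have bbC: "bounded_bilinear (cinner :: complex^'d \<Rightarrow> _)"
    using bilinear_cinner bilinear_conv_bounded_bilinear by blast
  have kb: "ketbra u = outer u u" for u by (simp add: ketbra_def outer_def)
  have hasR: "((\<lambda>\<theta>. ketbra (\<psi> \<theta>)) has_derivative (\<lambda>h. outer p (D h) + outer (D h) p)) (at \<theta>0)"
    unfolding kb p_def by (rule bounded_bilinear.FDERIV[OF bbO hasD hasD])
  have pdR: "partial_deriv (\<lambda>\<theta>. ketbra (\<psi> \<theta>)) \<theta>0 j = outer p (d j) + outer (d j) p" for j
    using frechet_derivative_at[OF hasR, symmetric] by (simp add: partial_deriv_def d_def)
  have hasC: "((\<lambda>\<theta>. cinner (\<psi> \<theta>) (\<psi> \<theta>)) has_derivative (\<lambda>h. cinner p (D h) + cinner (D h) p)) (at \<theta>0)"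
    unfolding p_def by (rule bounded_bilinear.FDERIV[OF bbC hasD hasD])
  have has0: "((\<lambda>\<theta>. cinner (\<psi> \<theta>) (\<psi> \<theta>)) has_derivative (\<lambda>h. 0)) (at \<theta>0)"
    by (rule has_derivative_transform_within_open[OF has_derivative_const assms(1,4)])
      (simp add: cinner_self assms(3))
  have eq0: "(\<lambda>h. cinner p (D h) + cinner (D h) p) = (\<lambda>h. 0)"
    using has_derivative_unique[OF hasC has0] .
  have s0: "s j + cnj (s j) = 0" for j
    using fun_cong[OF eq0, of "axis j 1"] cinner_cnj[of "d j" p] by (simp add: s_def d_def)
  have E: "outer p (d j) + outer (d j) p = (1/2::real) *\<^sub>R (outer p p ** lam j + lam j ** outer p p)" for j
  proof -
    have "partial_deriv (\<lambda>\<theta>. ketbra (\<psi> \<theta>)) \<theta>0 j = (1/2::real) *\<^sub>R (ketbra p ** lam j + lam j ** ketbra p)"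
      using assms(5)[of j] unfolding is_SLD_def p_def by simp
    then show ?thesis unfolding pdR by (simp only: kb)
  qed
  have l: "(lam j *v p) $ i = 2 * d j $ i - 2 * s j * p $ i" for j i
    by (rule key_l[OF pp s_def s0 E refl])
  have im: "Im (cinner (lam j *v p) (lam k *v p)) = 4 * Im (cinner (d j) (d k))" for j k
    by (rule key_im[OF pp s_def s_def s0 s0 l l])
  show ?thesis unfolding pd p_def[symmetric] using im by simp
qed

end
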